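(* Let $G$ be a simple, connected, finite graph with transition matrix $T=T(G)$. Then the Grover walk on $G$ is periodic if and only if $\cos^{-1}(\lambda)\in\pi\mathbb{Q}$ for every eigenvalue $\lambda$ of $T$.
   Context: For a simple connected finite graph $G=(V,E)$, let $\mathcal{A}=\{(u,v),(v,u)\mid uv\in E\}$ be the set of arcs; for an arc $e=(u,v)$ write $o(e)=u$, $t(e)=v$, and $\bar e=(v,u)$. The Grover walk on $G$ has time evolution $U$ on $\mathbb{C}^{\mathcal{A}}$ with entries $U_{e,f}=2/\deg t(f)$ if $t(f)=o(e)$ and $e\neq\bar f$; $U_{e,f}=2/\deg t(f)-1$ if $e=\bar f$; and $U_{e,f}=0$ otherwise. The walk (or $G$) is periodic if $U^k=I$ for some positive integer $k$. The transition matrix $T$ on $\mathbb{C}^V$ has entries $T_{u,v}=1/\deg u$ if $u\sim v$ and $0$ otherwise (its eigenvalues are real and lie in $[-1,1]$). *)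

theory Defs
  imports "HOL-Analysis.Analysis"
begin

definition simple_graph :: "'v set \<Rightarrow> ('v \<Rightarrow> 'v \<Rightarrow> bool) \<Rightarrow> bool" where
  "simple_graph V Adj \<longleftrightarrow> finite V \<and> (\<forall>u v. Adj u v \<longrightarrow> u \<in> V \<and> v \<in> V)
     \<and> (\<forall>u v. Adj u v \<longrightarrow> Adj v u) \<and> (\<forall>u. \<not> Adj u u)"

definition connected_graph :: "'v set \<Rightarrow> ('v \<Rightarrow> 'v \<Rightarrow> bool) \<Rightarrow> bool" where
  "connected_graph V Adj \<longleftrightarrow> V \<noteq> {} \<and>
     (\<forall>u\<in>V. \<forall>v\<in>V. (u, v) \<in> {(x, y). Adj x y}\<^sup>*)"

definition deg :: "'v set \<Rightarrow> ('v \<Rightarrow> 'v \<Rightarrow> bool) \<Rightarrow> 'v \<Rightarrow> nat" where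
  "deg V Adj v = card {u \<in> V. Adj v u}"

text \<open>Arcs: ordered pairs (u,v) with uv an edge; o(e) = fst e, t(e) = snd e, reverse = prod.swap.\<close>
definition arcs :: "('v \<Rightarrow> 'v \<Rightarrow> bool) \<Rightarrow> ('v \<times> 'v) set" where
  "arcs Adj = {(u, v). Adj u v}"

definition grover_U :: "'v set \<Rightarrow> ('v \<Rightarrow> 'v \<Rightarrow> bool) \<Rightarrow> ('v \<times> 'v) \<Rightarrow> ('v \<times> 'v) \<Rightarrow> complex" where
  "grover_U V Adj e f =
     (if e = prod.swap f then 2 / of_nat (deg V Adj (snd f)) - 1
      else if snd f = fst e then 2 / of_nat (deg V Adj (snd f))
      else 0)"

definition idmat :: "'i \<Rightarrow> 'i \<Rightarrow> complex" where
  "idmat i j = (if i = j then 1 else 0)"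

definition matmul :: "'i set \<Rightarrow> ('i \<Rightarrow> 'i \<Rightarrow> complex) \<Rightarrow> ('i \<Rightarrow> 'i \<Rightarrow> complex) \<Rightarrow> 'i \<Rightarrow> 'i \<Rightarrow> complex" where
  "matmul I M N i j = (\<Sum>k\<in>I. M i k * N k j)"

fun matpow :: "'i set \<Rightarrow> ('i \<Rightarrow> 'i \<Rightarrow> complex) \<Rightarrow> nat \<Rightarrow> 'i \<Rightarrow> 'i \<Rightarrow> complex" where
  "matpow I M 0 = idmat"
| "matpow I M (Suc n) = matmul I M (matpow I M n)"

definition grover_periodic :: "'v set \<Rightarrow> ('v \<Rightarrow> 'v \<Rightarrow> bool) \<Rightarrow> bool" where
  "grover_periodic V Adj \<longleftrightarrow>
     (\<exists>k>0. \<forall>e\<in>arcs Adj. \<forall>f\<in>arcs Adj.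
        matpow (arcs Adj) (grover_U V Adj) k e f = idmat e f)"

definition trans_T :: "'v set \<Rightarrow> ('v \<Rightarrow> 'v \<Rightarrow> bool) \<Rightarrow> 'v \<Rightarrow> 'v \<Rightarrow> complex" where
  "trans_T V Adj u v = (if Adj u v then 1 / of_nat (deg V Adj u) else 0)"

definition is_eigenvalue :: "'i set \<Rightarrow> ('i \<Rightarrow> 'i \<Rightarrow> complex) \<Rightarrow> complex \<Rightarrow> bool" where
  "is_eigenvalue I M c \<longleftrightarrow>
     (\<exists>x :: 'i \<Rightarrow> complex. (\<exists>i\<in>I. x i \<noteq> 0) \<and>
        (\<forall>i\<in>I. (\<Sum>j\<in>I. M i j * x j) = c * x i))"

end

theory Submission
  imports Defs "Jordan_Normal_Form.Schur_Decomposition" "Jordan_Normal_Form.Spectral_Radius"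
begin


lemma mult_entry: "A \<in> carrier_mat n n \<Longrightarrow> B \<in> carrier_mat n n \<Longrightarrow> i < n \<Longrightarrow> j < n \<Longrightarrow>
   (A * B) $$ (i,j) = (\<Sum>l<n. A $$ (i,l) * B $$ (l,j))"
  by (simp add: scalar_prod_def atLeast0LessThan)

definition mv :: "nat \<Rightarrow> complex mat \<Rightarrow> (nat \<Rightarrow> complex) \<Rightarrow> nat \<Rightarrow> complex" where
  "mv n M v i = (\<Sum>j<n. M $$ (i,j) * v j)"

definition ip :: "nat \<Rightarrow> (nat \<Rightarrow> complex) \<Rightarrow> (nat \<Rightarrow> complex) \<Rightarrow> complex" where
  "ip n a b = (\<Sum>i<n. a i * cnj (b i))"

lemma mv_cong: "(\<And>j. j < n \<Longrightarrow> v j = w j) \<Longrightarrow> mv n M v i = mv n M w i"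
  unfolding mv_def by (intro sum.cong) auto

lemma ip_cong: "(\<And>i. i < n \<Longrightarrow> a i = a' i) \<Longrightarrow> (\<And>i. i < n \<Longrightarrow> b i = b' i) \<Longrightarrow> ip n a b = ip n a' b'"
  unfolding ip_def by (intro sum.cong) auto

lemma mv_mult: assumes "A \<in> carrier_mat n n" "B \<in> carrier_mat n n" "i < n"
  shows "mv n (A * B) v i = mv n A (mv n B v) i"
proof -
  have "mv n (A * B) v i = (\<Sum>j<n. (\<Sum>l<n. A $$ (i,l) * B $$ (l,j)) * v j)"
    unfolding mv_def
  proof (intro sum.cong refl)
    fix j assume "j \<in> {..<n}"
    thus "(A * B) $$ (i, j) * v j = (\<Sum>l<n. A $$ (i, l) * B $$ (l, j)) * v j"
      using mult_entry[OF assms, of j] by simp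
  qed
  also have "\<dots> = (\<Sum>j<n. \<Sum>l<n. A $$ (i,l) * (B $$ (l,j) * v j))"
    by (simp add: sum_distrib_right mult.assoc)
  also have "\<dots> = (\<Sum>l<n. \<Sum>j<n. A $$ (i,l) * (B $$ (l,j) * v j))"
    by (rule sum.swap)
  also have "\<dots> = mv n A (mv n B v) i"
    unfolding mv_def by (simp add: sum_distrib_left)
  finally show ?thesis .
qed

lemma mv_one: assumes "i < n" shows "mv n (1\<^sub>m n) v i = v i"
proof -
  have "mv n (1\<^sub>m n) v i = (\<Sum>j<n. if i = j then v j else 0)"
    unfolding mv_def using assms by (intro sum.cong) auto
  thus ?thesis using assms by simp
qed

lemma sum_swap3: "(\<Sum>i\<in>A. \<Sum>j\<in>B. \<Sum>l\<in>C. f i j l) = (\<Sum>j\<in>B. \<Sum>l\<in>C. \<Sum>i\<in>A. f i j l)"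
proof -
  have "(\<Sum>i\<in>A. \<Sum>j\<in>B. \<Sum>l\<in>C. f i j l) = (\<Sum>j\<in>B. \<Sum>i\<in>A. \<Sum>l\<in>C. f i j l)"
    by (rule sum.swap)
  also have "\<dots> = (\<Sum>j\<in>B. \<Sum>l\<in>C. \<Sum>i\<in>A. f i j l)"
    by (intro sum.cong refl sum.swap)
  finally show ?thesis .
qed

lemma ip_iso: assumes A: "A \<in> carrier_mat n n"
  and unit: "\<And>j l. j < n \<Longrightarrow> l < n \<Longrightarrow> (\<Sum>i<n. A $$ (i,j) * cnj (A $$ (i,l))) = (if j = l then 1 else 0)"
  shows "ip n (mv n A a) (mv n A b) = ip n a b"
proof -
  have "ip n (mv n A a) (mv n A b) = (\<Sum>i<n. \<Sum>l<n. \<Sum>j<n. (a j * cnj (b l)) * (A $$ (i,j) * cnj (A $$ (i,l))))"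
    unfolding ip_def mv_def by (simp add: sum_distrib_left sum_distrib_right mult_ac)
  also have "\<dots> = (\<Sum>l<n. \<Sum>j<n. \<Sum>i<n. (a j * cnj (b l)) * (A $$ (i,j) * cnj (A $$ (i,l))))"
    by (rule sum_swap3)
  also have "\<dots> = (\<Sum>l<n. \<Sum>j<n. if j = l then a j * cnj (b l) else 0)"
    by (intro sum.cong refl) (simp add: sum_distrib_left[symmetric] unit)
  also have "\<dots> = ip n a b" unfolding ip_def by simp
  finally show ?thesis .
qed

lemma pow_mat_Suc_left: "A \<in> carrier_mat n n \<Longrightarrow> A ^\<^sub>m Suc k = A * A ^\<^sub>m k"
proof (induction k)
  case 0 thus ?case by simp
next
  case (Suc k)
  have "A ^\<^sub>m Suc (Suc k) = (A * A ^\<^sub>m k) * A" using Suc by simp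
  also have "\<dots> = A * (A ^\<^sub>m k * A)" using Suc.prems by (simp add: assoc_mult_mat[of _ n n _ n _ n])
  finally show ?case by simp
qed

lemma ip_pow_iso: assumes A: "A \<in> carrier_mat n n"
  and iso: "\<And>a b. ip n (mv n A a) (mv n A b) = ip n a b"
  shows "ip n (mv n (A ^\<^sub>m k) a) (mv n (A ^\<^sub>m k) b) = ip n a b"
proof (induction k arbitrary: a b)
  case 0 thus ?case using A by (auto intro!: ip_cong simp: mv_one)
next
  case (Suc k)
  have "ip n (mv n (A ^\<^sub>m Suc k) a) (mv n (A ^\<^sub>m Suc k) b)
      = ip n (mv n (A ^\<^sub>m k) (mv n A a)) (mv n (A ^\<^sub>m k) (mv n A b))"
    using A by (intro ip_cong) (auto simp: mv_mult)
  also have "\<dots> = ip n a b" using Suc iso by simp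
  finally show ?case .
qed

lemma ip_self_zero: assumes "ip n w w = 0" "i < n" shows "w i = 0"
proof -
  have "(\<Sum>i<n. (cmod (w i))\<^sup>2) = 0"
  proof -
    have "complex_of_real (\<Sum>i<n. (cmod (w i))\<^sup>2) = ip n w w"
      unfolding ip_def by (simp only: of_real_sum complex_norm_square)
    thus ?thesis using assms(1) by (metis of_real_eq_0_iff)
  qed
  hence "(cmod (w i))\<^sup>2 = 0" using assms(2)
    by (subst (asm) sum_nonneg_eq_0_iff) auto
  thus ?thesis by simp
qed

lemma ip_diff_left: "ip n (\<lambda>i. a i - b i) c = ip n a c - ip n b c"
  unfolding ip_def by (simp add: algebra_simps sum_subtractf)

lemma kernel_step:
  assumes W: "W \<in> carrier_mat n n"
    and iso: "\<And>a b. ip n (mv n W a) (mv n W b) = ip n a b"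
    and N: "N = W - 1\<^sub>m n"
    and z: "\<And>v i. i < n \<Longrightarrow> mv n (N ^\<^sub>m Suc (Suc m)) v i = 0"
    and i: "i < n"
  shows "mv n (N ^\<^sub>m Suc m) v i = 0"
proof -
  have Nc: "N \<in> carrier_mat n n" unfolding N by (rule minus_carrier_mat, simp)
  have mvN: "mv n N x j = mv n W x j - x j" if "j < n" for x j
  proof -
    have "mv n N x j = (\<Sum>l<n. W $$ (j,l) * x l - (if j = l then x l else 0))"
      unfolding mv_def N using W that by (intro sum.cong) (auto simp: algebra_simps)
    also have "\<dots> = mv n W x j - x j" unfolding mv_def using that by (simp add: sum_subtractf)
    finally show ?thesis .
  qed
  define u where "u = mv n (N ^\<^sub>m m) v"
  define w where "w = mv n (N ^\<^sub>m Suc m) v"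
  have wu: "w j = mv n N u j" if "j < n" for j
  proof -
    have "w j = mv n (N * N ^\<^sub>m m) v j" unfolding w_def by (simp only: pow_mat_Suc_left[OF Nc])
    also have "\<dots> = mv n N u j" unfolding u_def using Nc that by (intro mv_mult) auto
    finally show ?thesis .
  qed
  have Nw: "mv n N w j = 0" if "j < n" for j
  proof -
    have "mv n N w j = mv n (N * N ^\<^sub>m Suc m) v j" unfolding w_def using Nc that by (intro mv_mult[symmetric]) auto
    also have "\<dots> = mv n (N ^\<^sub>m Suc (Suc m)) v j" by (simp only: pow_mat_Suc_left[OF Nc])
    also have "\<dots> = 0" using z that by simp
    finally show ?thesis .
  qed
  have Ww: "mv n W w j = w j" if "j < n" for j using Nw[OF that] mvN[OF that] by simp
  have "ip n w w = ip n (\<lambda>j. mv n W u j - u j) w"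
    by (intro ip_cong) (auto simp: wu mvN)
  also have "\<dots> = ip n (mv n W u) w - ip n u w" by (rule ip_diff_left)
  also have "ip n (mv n W u) w = ip n (mv n W u) (mv n W w)"
    by (intro ip_cong) (auto simp: Ww)
  also have "\<dots> = ip n u w" by (rule iso)
  finally have "ip n w w = 0" by simp
  thus ?thesis using ip_self_zero i unfolding w_def by blast
qed

lemma kernel_all:
  assumes W: "W \<in> carrier_mat n n"
    and iso: "\<And>a b. ip n (mv n W a) (mv n W b) = ip n a b"
    and N: "N = W - 1\<^sub>m n"
    and z: "\<And>v i. i < n \<Longrightarrow> mv n (N ^\<^sub>m Suc m) v i = 0"
    and i: "i < n"
  shows "mv n N v i = 0"
  using z i
proof (induction m arbitrary: v i)
  case 0
  have Nc: "N \<in> carrier_mat n n" unfolding N by (rule minus_carrier_mat, simp)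
  show ?case using 0(1)[of i v] 0(2) Nc by simp
next
  case (Suc m)
  show ?case by (rule Suc.IH[OF kernel_step[OF W iso N Suc.prems(1)]]) (use Suc.prems in auto)
qed

lemma mat_from_mv: assumes "M \<in> carrier_mat n n" "i < n" "j < n"
  shows "M $$ (i,j) = mv n M (\<lambda>l. if l = j then 1 else 0) i"
  unfolding mv_def using assms by (simp add: if_distrib cong: if_cong)

lemma unitary_nilpotent_id:
  assumes W: "W \<in> carrier_mat n n"
    and iso: "\<And>a b. ip n (mv n W a) (mv n W b) = ip n a b"
    and nil: "(W - 1\<^sub>m n) ^\<^sub>m n = 0\<^sub>m n n"
  shows "W = 1\<^sub>m n"
proof (cases n)
  case 0 thus ?thesis using W by (intro eq_matI) auto
next
  case (Suc m)
  define N where "N = W - 1\<^sub>m n"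
  have Nc: "N \<in> carrier_mat n n" unfolding N_def by (rule minus_carrier_mat, simp)
  have z: "mv n (N ^\<^sub>m Suc m) v i = 0" if "i < n" for v i
    using nil that unfolding N_def[symmetric] Suc[symmetric] mv_def by (auto intro!: sum.neutral)
  have "N $$ (i,j) = 0" if "i < n" "j < n" for i j
    using kernel_all[OF W iso N_def z that(1)] mat_from_mv[OF Nc that] by simp
  thus ?thesis using W unfolding N_def by (intro eq_matI) auto
qed

lemma ut_mult: assumes B: "B \<in> carrier_mat n n" and C: "C \<in> carrier_mat n n"
  and uB: "upper_triangular B" and uC: "upper_triangular C"
  shows "upper_triangular (B * C) \<and> (\<forall>i<n. (B * C) $$ (i,i) = B $$ (i,i) * C $$ (i,i))"
proof
  have Bz: "B $$ (i,j) = 0" if "j < i" "i < n" for i j using uB B that by auto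
  have Cz: "C $$ (i,j) = 0" if "j < i" "i < n" for i j using uC C that by auto
  show "upper_triangular (B * C)"
  proof (rule upper_triangularI)
    fix i j assume ji: "j < i" and i: "i < dim_row (B * C)"
    hence i': "i < n" using B by simp
    have "(B * C) $$ (i,j) = (\<Sum>l<n. B $$ (i,l) * C $$ (l,j))"
      using mult_entry[OF B C i'] ji i' by simp
    also have "\<dots> = 0"
    proof (intro sum.neutral ballI)
      fix l assume l: "l \<in> {..<n}"
      show "B $$ (i,l) * C $$ (l,j) = 0"
      proof (cases "l < i")
        case True thus ?thesis using Bz i' by simp
      next
        case False thus ?thesis using Cz[of j l] ji l by simp
      qed
    qed
    finally show "(B * C) $$ (i,j) = 0" .
  qed
  show "\<forall>i<n. (B * C) $$ (i,i) = B $$ (i,i) * C $$ (i,i)"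
  proof (intro allI impI)
    fix i assume i: "i < n"
    have "(B * C) $$ (i,i) = (\<Sum>l<n. B $$ (i,l) * C $$ (l,i))"
      using mult_entry[OF B C i i] .
    also have "\<dots> = (\<Sum>l<n. if l = i then B $$ (i,i) * C $$ (i,i) else 0)"
    proof (intro sum.cong refl)
      fix l assume l: "l \<in> {..<n}"
      show "B $$ (i,l) * C $$ (l,i) = (if l = i then B $$ (i,i) * C $$ (i,i) else 0)"
      proof (cases "l < i")
        case True thus ?thesis using Bz i by simp
      next
        case False thus ?thesis using Cz[of i l] l by auto
      qed
    qed
    also have "\<dots> = B $$ (i,i) * C $$ (i,i)" using i by simp
    finally show "(B * C) $$ (i,i) = B $$ (i,i) * C $$ (i,i)" .
  qed
qed

lemma ut_pow: fixes B :: "complex mat" assumes B: "B \<in> carrier_mat n n" and uB: "upper_triangular B"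
  shows "upper_triangular (B ^\<^sub>m k) \<and> (\<forall>i<n. (B ^\<^sub>m k) $$ (i,i) = B $$ (i,i) ^ k)"
proof (induction k)
  case 0 thus ?case using B by auto
next
  case (Suc k)
  have Bk: "B ^\<^sub>m k \<in> carrier_mat n n" using B by simp
  from ut_mult[OF Bk B] Suc uB show ?case by (auto simp: mult.commute)
qed

lemma strict_nil: assumes N: "N \<in> carrier_mat n n"
  and z: "\<And>i j. i < n \<Longrightarrow> j < n \<Longrightarrow> j \<le> i \<Longrightarrow> N $$ (i,j) = 0"
  shows "N ^\<^sub>m n = 0\<^sub>m n n"
proof -
  have main: "\<forall>i j. i < n \<longrightarrow> j < n \<longrightarrow> j < i + m \<longrightarrow> (N ^\<^sub>m m) $$ (i,j) = 0" for m
  proof (induction m)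
    case 0 thus ?case using N by auto
  next
    case (Suc m)
    have Nm: "N ^\<^sub>m m \<in> carrier_mat n n" using N by simp
    show ?case
    proof (intro allI impI)
      fix i j assume i: "i < n" and j: "j < n" and ji: "j < i + Suc m"
      have "(N ^\<^sub>m Suc m) $$ (i,j) = (\<Sum>l<n. (N ^\<^sub>m m) $$ (i,l) * N $$ (l,j))"
        using mult_entry[OF Nm N i j] by simp
      also have "\<dots> = 0"
      proof (intro sum.neutral ballI)
        fix l assume l: "l \<in> {..<n}"
        show "(N ^\<^sub>m m) $$ (i,l) * N $$ (l,j) = 0"
        proof (cases "l < i + m")
          case True thus ?thesis using Suc.IH i l by auto
        next
          case False thus ?thesis using z[of l j] l j ji by auto
        qed
      qed
      finally show "(N ^\<^sub>m Suc m) $$ (i,j) = 0" .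
    qed
  qed
  show ?thesis using main[of n] N by (intro eq_matI) auto
qed

lemma unitary_eig_periodic:
  fixes A :: "complex mat"
  assumes A: "A \<in> carrier_mat n n"
  and unit: "\<And>j l. j < n \<Longrightarrow> l < n \<Longrightarrow> (\<Sum>i<n. A $$ (i,j) * cnj (A $$ (i,l))) = (if j = l then 1 else 0)"
  and ev: "\<And>\<mu>. eigenvalue A \<mu> \<Longrightarrow> \<mu> ^ k = 1"
  shows "A ^\<^sub>m k = 1\<^sub>m n"
proof -
  obtain es where cp: "char_poly A = (\<Prod>a\<leftarrow>es. [:- a, 1:])" and len: "length es = n"
    using char_poly_factorized[OF A] by blast
  obtain B P Q where sd: "schur_decomposition A es = (B,P,Q)" by (cases "schur_decomposition A es") auto
  from schur_decomposition[OF A cp sd] have sim: "similar_mat_wit A B P Q"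
    and uB: "upper_triangular B" and dB: "diag_mat B = es" by auto
  from similar_mat_witD2[OF A sim] have Bc: "B \<in> carrier_mat n n" and Pc: "P \<in> carrier_mat n n"
    and Qc: "Q \<in> carrier_mat n n" and PQ: "P * Q = 1\<^sub>m n" and ABPQ: "A = P * B * Q" by auto
  have diag1: "B $$ (i,i) ^ k = 1" if i: "i < n" for i
  proof -
    have "B $$ (i,i) \<in> set es" using dB i Bc unfolding diag_mat_def by auto
    hence "poly (char_poly A) (B $$ (i,i)) = 0" unfolding cp
      by (induction es) auto
    hence "eigenvalue A (B $$ (i,i))" using eigenvalue_root_char_poly[OF A] by simp
    thus ?thesis by (rule ev)
  qed
  define C where "C = B ^\<^sub>m k"
  have Cc: "C \<in> carrier_mat n n" unfolding C_def using Bc by simp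
  from ut_pow[OF Bc uB, of k] diag1 have uC: "upper_triangular C" and dC: "\<And>i. i < n \<Longrightarrow> C $$ (i,i) = 1"
    unfolding C_def by auto
  define N where "N = C - 1\<^sub>m n"
  have Nc: "N \<in> carrier_mat n n" unfolding N_def by (rule minus_carrier_mat, simp)
  have Nz: "N $$ (i,j) = 0" if "i < n" "j < n" "j \<le> i" for i j
  proof (cases "j = i")
    case True thus ?thesis using that dC Cc unfolding N_def by simp
  next
    case False hence "j < i" using that by simp
    thus ?thesis using that uC Cc unfolding N_def by auto
  qed
  have Nn: "N ^\<^sub>m n = 0\<^sub>m n n" by (rule strict_nil[OF Nc Nz])
  have Ak: "A ^\<^sub>m k = P * C * Q" unfolding C_def by (rule similar_mat_wit_pow_id[OF sim])
  have AkN: "A ^\<^sub>m k - 1\<^sub>m n = P * N * Q"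
  proof -
    have "P * N * Q = P * C * Q - P * 1\<^sub>m n * Q" unfolding N_def
      using Pc Cc Qc by (simp add: mult_minus_distrib_mat[of _ n n] minus_mult_distrib_mat[of _ n n])
    also have "P * 1\<^sub>m n * Q = 1\<^sub>m n" using Pc PQ by simp
    finally show ?thesis using Ak by simp
  qed
  have simN: "similar_mat_wit (P * N * Q) N P Q"
    using sim Nc unfolding similar_mat_wit_def Let_def using Pc Qc by auto
  have "(A ^\<^sub>m k - 1\<^sub>m n) ^\<^sub>m n = P * (N ^\<^sub>m n) * Q"
    unfolding AkN by (rule similar_mat_wit_pow_id[OF simN])
  also have "\<dots> = 0\<^sub>m n n" unfolding Nn using Pc Qc by simp
  finally have nil: "(A ^\<^sub>m k - 1\<^sub>m n) ^\<^sub>m n = 0\<^sub>m n n" .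
  have iso: "ip n (mv n A a) (mv n A b) = ip n a b" for a b by (rule ip_iso[OF A unit])
  have Akc: "A ^\<^sub>m k \<in> carrier_mat n n" using A by simp
  show ?thesis
    by (rule unitary_nilpotent_id[OF Akc ip_pow_iso[OF A iso] nil])
qed



lemma root1:
  fixes l :: real and k :: nat
  assumes l: "\<bar>l\<bar> \<le> 1" and k: "k > 0" and r: "(Complex l (sqrt (1 - l\<^sup>2))) ^ k = 1"
  shows "\<exists>q\<in>\<rat>. arccos l = pi * q"
proof -
  define th where "th = arccos l"
  have c: "cos th = l" and s: "sin th = sqrt (1 - l\<^sup>2)" unfolding th_def using l
    by (auto simp: sin_arccos_abs abs_le_iff)
  have "Complex l (sqrt (1 - l\<^sup>2)) = cis th" using c s by (simp add: cis.ctr)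
  with r have "cis (real k * th) = 1" by (metis Complex.DeMoivre)
  hence "cos (real k * th) = 1" by (metis cis.sel(1) one_complex.sel(1))
  then obtain m :: int where m: "real k * th = real_of_int m * 2 * pi" using cos_one_2pi_int by blast
  have "th = pi * (2 * of_int m / of_nat k)" using m k by (simp add: field_simps)
  moreover have "(2 * of_int m / of_nat k :: real) \<in> \<rat>" by simp
  ultimately show ?thesis unfolding th_def by blast
qed

lemma root2:
  fixes \<mu> :: complex and q :: real
  assumes n: "cmod \<mu> = 1" and q: "q \<in> \<rat>" and a: "arccos (Re \<mu>) = pi * q"
  shows "\<exists>m>0. \<mu> ^ m = 1"
proof -
  define t where "t = Arg \<mu>"
  have mu0: "\<mu> \<noteq> 0" using n by auto
  have mu: "\<mu> = cis t" unfolding t_def using cis_Arg[OF mu0] n by (simp add: sgn_eq)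
  have "Re \<mu> = cos \<bar>t\<bar>" using mu by simp
  moreover have "-pi < t" "t \<le> pi" unfolding t_def using Arg_bounded by auto
  moreover have "arccos (cos \<bar>t\<bar>) = \<bar>t\<bar>" using \<open>-pi < t\<close> \<open>t \<le> pi\<close> by (intro arccos_cos) auto
  ultimately have "arccos (Re \<mu>) = \<bar>t\<bar>" by simp
  with a have at: "\<bar>t\<bar> = pi * q" by simp
  obtain a b where b: "b > 0" and qab: "q = of_int a / of_int b" using Rats_cases'[OF q] by blast
  have "t = pi * q \<or> t = - (pi * q)" using at by linarith
  then obtain c :: int where tc: "t = pi * (of_int c / of_int b)"
    using qab by (metis minus_divide_left mult_minus_right of_int_minus)
  have "\<mu> ^ (2 * nat b) = cis (real (2 * nat b) * t)" unfolding mu by (rule Complex.DeMoivre)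
  also have "real (2 * nat b) * t = 2 * pi * of_int c" using b tc by (simp add: field_simps)
  also have "cis (2 * pi * of_int c) = 1" by simp
  finally show ?thesis using b by (intro exI[of _ "2 * nat b"]) auto
qed

locale sgraph =
  fixes V :: "'v set" and Adj :: "'v \<Rightarrow> 'v \<Rightarrow> bool"
  assumes sg: "simple_graph V Adj"
begin

abbreviation "d v \<equiv> deg V Adj v"
abbreviation "U \<equiv> grover_U V Adj"
definition "Nb v = {u\<in>V. Adj v u}"
definition "outA v = {e \<in> arcs Adj. fst e = v}"
definition "inA v = {e \<in> arcs Adj. snd e = v}"

lemma finV: "finite V" using sg unfolding simple_graph_def by auto
lemma adjV: "Adj u v \<Longrightarrow> u \<in> V \<and> v \<in> V" using sg unfolding simple_graph_def by auto
lemma adj_sym: "Adj u v \<Longrightarrow> Adj v u" using sg unfolding simple_graph_def by auto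

lemma arcs_sub: "arcs Adj \<subseteq> V \<times> V" unfolding arcs_def using adjV by auto
lemma fin_arcs: "finite (arcs Adj)" using arcs_sub finV by (meson finite_SigmaI finite_subset)
lemma arcsD: "e \<in> arcs Adj \<Longrightarrow> Adj (fst e) (snd e)" unfolding arcs_def by auto
lemma swap_arcs: "e \<in> arcs Adj \<Longrightarrow> prod.swap e \<in> arcs Adj"
  unfolding arcs_def using adj_sym by auto
lemma fin_Nb: "finite (Nb v)" unfolding Nb_def using finV by auto
lemma d_Nb: "d v = card (Nb v)" unfolding deg_def Nb_def ..

lemma outA_eq: "outA v = Pair v ` Nb v"
  unfolding outA_def Nb_def arcs_def using adjV by force
lemma inA_eq: "inA v = (\<lambda>u. (u, v)) ` Nb v"
  unfolding inA_def Nb_def arcs_def using adjV adj_sym by force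
lemma card_outA: "card (outA v) = d v"
  unfolding outA_eq d_Nb by (rule card_image) (auto simp: inj_on_def)
lemma card_inA: "card (inA v) = d v"
  unfolding inA_eq d_Nb by (rule card_image) (auto simp: inj_on_def)
lemma fin_outA: "finite (outA v)" unfolding outA_eq using fin_Nb by simp
lemma fin_inA: "finite (inA v)" unfolding inA_eq using fin_Nb by simp
lemma swap_outA: "prod.swap ` outA v = inA v"
  unfolding outA_def inA_def using swap_arcs by force

lemma U_alt: "U e f = (if fst e = snd f then 2 / of_nat (d (snd f)) else 0) - (if e = prod.swap f then 1 else 0)"
  unfolding grover_U_def by auto

lemma U_apply: assumes e: "e \<in> arcs Adj"
  shows "(\<Sum>f\<in>arcs Adj. U e f * \<psi> f) = 2 / of_nat (d (fst e)) * (\<Sum>f\<in>inA (fst e). \<psi> f) - \<psi> (prod.swap e)"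
proof -
  have "(\<Sum>f\<in>arcs Adj. U e f * \<psi> f) = (\<Sum>f\<in>arcs Adj. (if snd f = fst e then 2 / of_nat (d (fst e)) * \<psi> f else 0)
         - (if f = prod.swap e then \<psi> f else 0))"
    by (intro sum.cong refl) (auto simp: U_alt algebra_simps)
  also have "\<dots> = (\<Sum>f\<in>arcs Adj. (if snd f = fst e then 2 / of_nat (d (fst e)) * \<psi> f else 0))
         - (\<Sum>f\<in>arcs Adj. if f = prod.swap e then \<psi> f else 0)"
    by (rule sum_subtractf)
  also have "(\<Sum>f\<in>arcs Adj. (if snd f = fst e then 2 / of_nat (d (fst e)) * \<psi> f else 0))
      = (\<Sum>f\<in>inA (fst e). 2 / of_nat (d (fst e)) * \<psi> f)"
    unfolding inA_def by (subst sum.inter_filter[OF fin_arcs]) (auto intro!: sum.cong)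
  also have "(\<Sum>f\<in>arcs Adj. if f = prod.swap e then \<psi> f else 0) = \<psi> (prod.swap e)"
    using fin_arcs swap_arcs[OF e] by simp
  finally show ?thesis by (simp add: sum_distrib_left)
qed

lemma d_pos: "f \<in> arcs Adj \<Longrightarrow> d (snd f) > 0"
proof -
  assume f: "f \<in> arcs Adj"
  hence "f \<in> inA (snd f)" unfolding inA_def by auto
  hence "card (inA (snd f)) > 0" using fin_inA by (metis card_gt_0_iff empty_iff)
  thus ?thesis using card_inA by simp
qed

lemma colsum: assumes f: "f \<in> arcs Adj"
  shows "(\<Sum>e\<in>outA v. U e f) = (if v = snd f then 1 else 0)"
proof -
  have "(\<Sum>e\<in>outA v. U e f) = (\<Sum>e\<in>outA v. (if v = snd f then 2 / of_nat (d (snd f)) else 0)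
          - (if e = prod.swap f then 1 else 0))"
    by (intro sum.cong refl) (auto simp: U_alt outA_def)
  also have "\<dots> = (\<Sum>e\<in>outA v. (if v = snd f then 2 / of_nat (d (snd f)) else 0))
          - (\<Sum>e\<in>outA v. if e = prod.swap f then 1 else 0)"
    by (rule sum_subtractf)
  also have "(\<Sum>e\<in>outA v. if e = prod.swap f then 1 else 0) = (if v = snd f then 1 else (0::complex))"
    using fin_outA swap_arcs[OF f] by (auto simp: outA_def)
  also have "(\<Sum>e\<in>outA v. (if v = snd f then 2 / of_nat (d (snd f)) else 0))
      = (if v = snd f then of_nat (d v) * (2 / of_nat (d (snd f))) else (0::complex))"
    by (simp add: card_outA)
  finally show ?thesis using d_pos[OF f] by auto
qed

lemma unit_fun: assumes f: "f \<in> arcs Adj" and g: "g \<in> arcs Adj"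
  shows "(\<Sum>e\<in>arcs Adj. U e f * U e g) = (if f = g then 1 else 0)"
proof -
  have "(\<Sum>e\<in>arcs Adj. U e f * U e g) = (\<Sum>e\<in>arcs Adj. (if fst e = snd g then 2 / of_nat (d (snd g)) * U e f else 0)
          - (if e = prod.swap g then U e f else 0))"
    by (intro sum.cong refl) (auto simp: U_alt[of _ g] algebra_simps)
  also have "\<dots> = (\<Sum>e\<in>arcs Adj. (if fst e = snd g then 2 / of_nat (d (snd g)) * U e f else 0))
          - (\<Sum>e\<in>arcs Adj. if e = prod.swap g then U e f else 0)"
    by (rule sum_subtractf)
  also have "(\<Sum>e\<in>arcs Adj. (if fst e = snd g then 2 / of_nat (d (snd g)) * U e f else 0))
      = (\<Sum>e\<in>outA (snd g). 2 / of_nat (d (snd g)) * U e f)"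
    unfolding outA_def by (subst sum.inter_filter[OF fin_arcs]) (auto intro!: sum.cong)
  also have "\<dots> = 2 / of_nat (d (snd g)) * (\<Sum>e\<in>outA (snd g). U e f)" by (simp add: sum_distrib_left)
  also have "(\<Sum>e\<in>arcs Adj. if e = prod.swap g then U e f else 0) = U (prod.swap g) f"
    using fin_arcs swap_arcs[OF g] by simp
  finally show ?thesis using colsum[OF f, of "snd g"] by (auto simp: U_alt dest: arg_cong[where f=prod.swap])
qed


lemma T_apply: "(\<Sum>j\<in>V. trans_T V Adj i j * x j) = (\<Sum>j\<in>Nb i. x j) / of_nat (d i)"
proof -
  have "(\<Sum>j\<in>V. trans_T V Adj i j * x j) = (\<Sum>j\<in>V. if Adj i j then x j / of_nat (d i) else 0)"
    unfolding trans_T_def by (intro sum.cong) auto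
  also have "\<dots> = (\<Sum>j\<in>Nb i. x j / of_nat (d i))"
    unfolding Nb_def by (subst sum.inter_filter[OF finV]) auto
  finally show ?thesis by (simp add: sum_divide_distrib)
qed

lemma sum_inA: "(\<Sum>f\<in>inA v. g f) = (\<Sum>u\<in>Nb v. g (u, v))"
  unfolding inA_eq by (subst sum.reindex) (auto simp: inj_on_def)

lemma sum_outA_swap: "(\<Sum>e\<in>outA v. g (prod.swap e)) = (\<Sum>f\<in>inA v. g f)"
proof -
  have "(\<Sum>f\<in>inA v. g f) = (\<Sum>f\<in>prod.swap ` outA v. g f)" unfolding swap_outA ..
  also have "\<dots> = (\<Sum>e\<in>outA v. g (prod.swap e))"
    by (subst sum.reindex) (auto simp: inj_on_def)
  finally show ?thesis ..
qed

lemma sum_inA_swap: "(\<Sum>e\<in>inA v. g (prod.swap e)) = (\<Sum>f\<in>outA v. g f)"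
proof -
  have io: "prod.swap ` inA v = outA v" unfolding swap_outA[symmetric] image_image by simp
  have "(\<Sum>f\<in>outA v. g f) = (\<Sum>f\<in>prod.swap ` inA v. g f)" unfolding io ..
  also have "\<dots> = (\<Sum>e\<in>inA v. g (prod.swap e))"
    by (subst sum.reindex) (auto simp: inj_on_def)
  finally show ?thesis ..
qed

lemma eig_bound:
  fixes l :: real
  assumes w0: "w0 \<in> V" "x w0 \<noteq> 0"
    and eig: "\<And>i. i \<in> V \<Longrightarrow> (\<Sum>j\<in>V. trans_T V Adj i j * x j) = complex_of_real l * x i"
  shows "\<bar>l\<bar> \<le> 1"
proof -
  define M where "M = Max ((\<lambda>v. cmod (x v)) ` V)"
  have "M \<in> (\<lambda>v. cmod (x v)) ` V" unfolding M_def using finV w0 by (intro Max_in) auto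
  then obtain w where w: "w \<in> V" and Mw: "M = cmod (x w)" by auto
  have le: "cmod (x v) \<le> cmod (x w)" if "v \<in> V" for v
    using that finV unfolding Mw[symmetric] M_def by (intro Max_ge) auto
  have pos: "cmod (x w) > 0" using le[OF w0(1)] w0(2) by (metis zero_less_norm_iff order_less_le_trans)
  have e1: "complex_of_real l * x w = (\<Sum>j\<in>Nb w. x j) / of_nat (d w)"
    using eig[OF w] T_apply[of w x] by simp
  have "cmod (complex_of_real l * x w) = cmod (\<Sum>j\<in>Nb w. x j) / of_nat (d w)"
    unfolding e1 norm_divide by simp
  also have "cmod (\<Sum>j\<in>Nb w. x j) \<le> (\<Sum>j\<in>Nb w. cmod (x j))" by (rule norm_sum)
  also have "(\<Sum>j\<in>Nb w. cmod (x j)) \<le> of_nat (card (Nb w)) * cmod (x w)"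
    using le unfolding Nb_def by (intro sum_bounded_above) auto
  finally have "\<bar>l\<bar> * cmod (x w) \<le> of_nat (d w) * cmod (x w) / of_nat (d w)"
    by (simp add: d_Nb norm_mult divide_right_mono)
  also have "\<dots> \<le> cmod (x w)" by (cases "d w = 0") auto
  finally show ?thesis using pos by simp
qed

lemma mu_quad:
  fixes l :: real assumes l: "\<bar>l\<bar> \<le> 1"
  defines "\<mu> \<equiv> Complex l (sqrt (1 - l\<^sup>2))"
  shows "1 - 2 * \<mu> * complex_of_real l = - (\<mu> ^ 2)"
proof -
  have "l\<^sup>2 \<le> 1" using l by (simp add: abs_square_le_1)
  hence s: "(sqrt (1 - l\<^sup>2))\<^sup>2 = 1 - l\<^sup>2" by simp
  show ?thesis unfolding \<mu>_def using s by (simp add: complex_eq_iff power2_eq_square algebra_simps)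
qed

lemma fwd_eigvec:
  fixes l :: real
  assumes l: "\<bar>l\<bar> \<le> 1"
    and eig: "\<And>i. i \<in> V \<Longrightarrow> (\<Sum>j\<in>V. trans_T V Adj i j * x j) = complex_of_real l * x i"
    and mu: "\<mu> = Complex l (sqrt (1 - l\<^sup>2))"
    and psi: "\<psi> = (\<lambda>e. x (snd e) - \<mu> * x (fst e))"
    and e: "e \<in> arcs Adj"
  shows "(\<Sum>f\<in>arcs Adj. U e f * \<psi> f) = \<mu> * \<psi> e"
proof -
  define v where "v = fst e"
  have vV: "v \<in> V" unfolding v_def using arcsD[OF e] adjV by blast
  have dpos: "d v > 0" using d_pos[OF swap_arcs[OF e]] unfolding v_def by simp
  have sN: "(\<Sum>u\<in>Nb v. x u) = of_nat (d v) * (complex_of_real l * x v)"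
    using eig[OF vV] T_apply[of v x] dpos by (simp add: field_simps)
  have "(\<Sum>f\<in>inA v. \<psi> f) = (\<Sum>u\<in>Nb v. x v - \<mu> * x u)"
    unfolding sum_inA psi by simp
  also have "\<dots> = of_nat (d v) * x v - \<mu> * (\<Sum>u\<in>Nb v. x u)"
    by (simp add: sum_subtractf sum_distrib_left d_Nb)
  finally have sI: "(\<Sum>f\<in>inA v. \<psi> f) = of_nat (d v) * x v - \<mu> * (of_nat (d v) * (complex_of_real l * x v))"
    unfolding sN .
  have "(\<Sum>f\<in>arcs Adj. U e f * \<psi> f) = 2 / of_nat (d v) * (\<Sum>f\<in>inA v. \<psi> f) - \<psi> (prod.swap e)"
    unfolding v_def by (rule U_apply[OF e])
  also have "\<dots> = (1 - 2 * \<mu> * complex_of_real l) * x v + \<mu> * x (snd e)"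
    unfolding sI using dpos by (simp add: psi v_def field_simps)
  also have "\<dots> = \<mu> * \<psi> e" unfolding mu_quad[OF l, folded mu] psi v_def
    by (simp add: algebra_simps power2_eq_square)
  finally show ?thesis .
qed


lemma fwd_main:
  fixes l :: real
  assumes per: "\<And>\<psi> \<mu>. (\<exists>e\<in>arcs Adj. \<psi> e \<noteq> 0) \<Longrightarrow>
       (\<forall>e\<in>arcs Adj. (\<Sum>f\<in>arcs Adj. U e f * \<psi> f) = \<mu> * \<psi> e) \<Longrightarrow> \<exists>k>0. \<mu> ^ k = 1"
    and ev: "is_eigenvalue V (trans_T V Adj) (complex_of_real l)"
  shows "\<exists>q\<in>\<rat>. arccos l = pi * q"
proof -
  obtain x where xnz: "\<exists>i\<in>V. x i \<noteq> 0"
    and eig: "\<forall>i\<in>V. (\<Sum>j\<in>V. trans_T V Adj i j * x j) = complex_of_real l * x i"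
    using ev unfolding is_eigenvalue_def by blast
  obtain w0 where w0: "w0 \<in> V" "x w0 \<noteq> 0" using xnz by blast
  have l: "\<bar>l\<bar> \<le> 1" by (rule eig_bound[of w0 x l, OF w0]) (use eig in auto)
  define \<mu> where "\<mu> = Complex l (sqrt (1 - l\<^sup>2))"
  define \<psi> where "\<psi> = (\<lambda>e. x (snd e) - \<mu> * x (fst e))"
  have eigU: "\<forall>e\<in>arcs Adj. (\<Sum>f\<in>arcs Adj. U e f * \<psi> f) = \<mu> * \<psi> e"
    using fwd_eigvec[OF l _ \<mu>_def \<psi>_def] eig by auto
  show ?thesis
  proof (cases "\<exists>e\<in>arcs Adj. \<psi> e \<noteq> 0")
    case True
    then obtain k where "k > 0" "\<mu> ^ k = 1" using per eigU by blast
    thus ?thesis using root1[OF l] \<mu>_def by blast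
  next
    case False
    show ?thesis
    proof (cases "Nb w0 = {}")
      case True
      then have "complex_of_real l * x w0 = 0" using eig w0 T_apply[of w0 x] by simp
      hence "l = 0" using w0 by simp
      thus ?thesis by (intro bexI[of _ "1/2"]) auto
    next
      case nb: False
      then obtain u where u: "u \<in> Nb w0" by blast
      hence a1: "(w0,u) \<in> arcs Adj" "(u,w0) \<in> arcs Adj" unfolding Nb_def arcs_def using adj_sym by auto
      have "x u = \<mu> * x w0" "x w0 = \<mu> * x u" using False a1 unfolding \<psi>_def by force+
      hence "(\<mu>\<^sup>2 - 1) * x w0 = 0" by (simp add: power2_eq_square algebra_simps)
      hence "\<mu> ^ 2 = 1" using w0 by simp
      thus ?thesis using root1[OF l, of 2] \<mu>_def by auto
    qed
  qed
qed

lemma bwd_main: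
  assumes H: "\<And>l::real. is_eigenvalue V (trans_T V Adj) (complex_of_real l) \<Longrightarrow> \<exists>q\<in>\<rat>. arccos l = pi * q"
    and nz: "\<exists>e\<in>arcs Adj. \<psi> e \<noteq> 0"
    and eigU: "\<And>e. e \<in> arcs Adj \<Longrightarrow> (\<Sum>f\<in>arcs Adj. U e f * \<psi> f) = \<mu> * \<psi> e"
    and n1: "cmod \<mu> = 1"
  shows "\<exists>m>0. \<mu> ^ m = 1"
proof -
  define X where "X v = (\<Sum>f\<in>inA v. \<psi> f)" for v
  define Y where "Y v = (\<Sum>f\<in>outA v. \<psi> f)" for v
  have mu0: "\<mu> \<noteq> 0" using n1 by auto
  have eq: "\<mu> * \<psi> e = 2 / of_nat (d (fst e)) * X (fst e) - \<psi> (prod.swap e)" if "e \<in> arcs Adj" for e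
    using eigU[OF that] U_apply[OF that] unfolding X_def by simp
  have B1: "\<mu> * Y v = X v" if v: "v \<in> V" for v
  proof -
    have "\<mu> * Y v = (\<Sum>e\<in>outA v. 2 / of_nat (d v) * X v - \<psi> (prod.swap e))"
      unfolding Y_def sum_distrib_left by (intro sum.cong refl) (auto simp: outA_def eq)
    also have "\<dots> = of_nat (d v) * (2 / of_nat (d v) * X v) - X v"
      by (simp add: sum_subtractf card_outA sum_outA_swap X_def)
    also have "\<dots> = X v"
    proof (cases "d v = 0")
      case True
      hence "inA v = {}" using card_inA fin_inA by (metis card_0_eq)
      thus ?thesis unfolding X_def using True by simp
    qed simp
    finally show ?thesis .
  qed
  have B2: "\<mu> * X v = (\<Sum>u\<in>Nb v. 2 / of_nat (d u) * X u) - Y v" if v: "v \<in> V" for v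
  proof -
    have "\<mu> * X v = (\<Sum>e\<in>inA v. \<mu> * \<psi> e)" unfolding X_def sum_distrib_left ..
    also have "\<dots> = (\<Sum>e\<in>inA v. 2 / of_nat (d (fst e)) * X (fst e) - \<psi> (prod.swap e))"
      by (intro sum.cong refl) (auto simp: inA_def eq)
    also have "\<dots> = (\<Sum>e\<in>inA v. 2 / of_nat (d (fst e)) * X (fst e)) - (\<Sum>e\<in>inA v. \<psi> (prod.swap e))"
      by (rule sum_subtractf)
    also have "\<dots> = (\<Sum>u\<in>Nb v. 2 / of_nat (d u) * X u) - Y v"
      unfolding sum_inA_swap[of \<psi> v] Y_def sum_inA[of "\<lambda>e. 2 / of_nat (d (fst e)) * X (fst e)" v] by simp
    finally show ?thesis .
  qed
  have cm: "cnj \<mu> * \<mu> = 1"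
    using complex_norm_square[of \<mu>] n1 by (simp add: mult.commute)
  have B3: "complex_of_real (Re \<mu>) * X v = (\<Sum>u\<in>Nb v. X u / of_nat (d u))" if v: "v \<in> V" for v
  proof -
    have Yv: "Y v = cnj \<mu> * X v" using B1[OF v] cm by (metis mult.assoc mult_1)
    have "(\<mu> + cnj \<mu>) * X v = (\<Sum>u\<in>Nb v. 2 / of_nat (d u) * X u)"
      using B2[OF v] Yv by (simp add: algebra_simps)
    also have "\<dots> = 2 * (\<Sum>u\<in>Nb v. X u / of_nat (d u))"
      by (simp add: sum_distrib_left)
    finally show ?thesis by (simp add: complex_add_cnj)
  qed
  show ?thesis
  proof (cases "\<exists>w\<in>V. X w \<noteq> 0")
    case True
    then obtain w where w: "w \<in> V" "X w \<noteq> 0" by blast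
    define z where "z u = X u / of_nat (d u)" for u
    have "d w \<noteq> 0"
    proof
      assume "d w = 0"
      hence "inA w = {}" using card_inA fin_inA by (metis card_0_eq)
      thus False using w unfolding X_def by simp
    qed
    hence zw: "z w \<noteq> 0" unfolding z_def using w by simp
    have "is_eigenvalue V (trans_T V Adj) (complex_of_real (Re \<mu>))"
      unfolding is_eigenvalue_def
    proof (intro exI[of _ z] conjI ballI)
      show "\<exists>i\<in>V. z i \<noteq> 0" using zw w by blast
      fix i assume i: "i \<in> V"
      show "(\<Sum>j\<in>V. trans_T V Adj i j * z j) = complex_of_real (Re \<mu>) * z i"
        unfolding T_apply z_def B3[OF i, symmetric] by simp
    qed
    then obtain q where "q \<in> \<rat>" "arccos (Re \<mu>) = pi * q" using H by blast
    thus ?thesis using root2 n1 by blast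
  next
    case False
    obtain e where e: "e \<in> arcs Adj" "\<psi> e \<noteq> 0" using nz by blast
    have fV: "fst a \<in> V" if "a \<in> arcs Adj" for a using arcsD[OF that] adjV by blast
    have ev2: "\<mu> * \<psi> a = - \<psi> (prod.swap a)" if "a \<in> arcs Adj" for a
      using eq[OF that] False fV[OF that] by simp
    have "\<mu> * (\<mu> * \<psi> e) = - (\<mu> * \<psi> (prod.swap e))" using ev2[OF e(1)] by simp
    also have "\<dots> = \<psi> e" using ev2[OF swap_arcs[OF e(1)]] by simp
    finally have "(\<mu>\<^sup>2 - 1) * \<psi> e = 0" by (simp add: power2_eq_square algebra_simps)
    hence "\<mu> ^ 2 = 1" using e by simp
    thus ?thesis by (intro exI[of _ 2]) auto
  qed
qed

end


lemma mult_vec_entry: "A \<in> carrier_mat n n \<Longrightarrow> v \<in> carrier_vec n \<Longrightarrow> i < n \<Longrightarrow>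
   (A *\<^sub>v v) $ i = (\<Sum>l<n. A $$ (i,l) * v $ l)"
  by (simp add: scalar_prod_def atLeast0LessThan)

lemma sum_list_set: assumes "distinct xs"
  shows "(\<Sum>e\<in>set xs. g e) = (\<Sum>i<length xs. g (xs ! i))"
proof -
  have "set xs = (!) xs ` {..<length xs}" by (auto simp: set_conv_nth)
  moreover have "inj_on ((!) xs) {..<length xs}" using assms by (intro inj_on_nth) auto
  ultimately show ?thesis by (simp add: sum.reindex)
qed

theorem corollary2p2:
  fixes V :: "'v set" and Adj :: "'v \<Rightarrow> 'v \<Rightarrow> bool"
  assumes "simple_graph V Adj" and "connected_graph V Adj"
  shows "grover_periodic V Adj \<longleftrightarrow>
    (\<forall>l::real. is_eigenvalue V (trans_T V Adj) (complex_of_real l) \<longrightarrow>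
       (\<exists>q\<in>\<rat>. arccos l = pi * q))"
proof -
  interpret G: sgraph V Adj using assms(1) by unfold_locales
  obtain xs where xs: "set xs = arcs Adj" "distinct xs"
    using finite_distinct_list[OF G.fin_arcs] by blast
  define n where "n = length xs"
  define A where "A = mat n n (\<lambda>(i,j). grover_U V Adj (xs ! i) (xs ! j))"
  have Ac: "A \<in> carrier_mat n n" unfolding A_def by simp
  have Aij: "A $$ (i,j) = grover_U V Adj (xs ! i) (xs ! j)" if "i < n" "j < n" for i j
    unfolding A_def using that by simp
  have xs_in: "xs ! i \<in> arcs Adj" if "i < n" for i using that xs(1) unfolding n_def by auto
  have sum_arcs: "(\<Sum>e\<in>arcs Adj. g e) = (\<Sum>i<n. g (xs ! i))" for g
    using sum_list_set[OF xs(2), of g] xs(1) unfolding n_def by simp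
  have arc_ex: "\<exists>i<n. e = xs ! i" if "e \<in> arcs Adj" for e
  proof -
    have "e \<in> set xs" using that xs(1) by simp
    thus ?thesis unfolding n_def by (metis in_set_conv_nth)
  qed
  have pow: "matpow (arcs Adj) (grover_U V Adj) k (xs ! i) (xs ! j) = (A ^\<^sub>m k) $$ (i,j)"
    if "i < n" "j < n" for i j k
    using that
  proof (induction k arbitrary: i j)
    case 0
    thus ?case using xs(2) Ac unfolding n_def by (simp add: idmat_def nth_eq_iff_index_eq)
  next
    case (Suc k)
    have "matpow (arcs Adj) (grover_U V Adj) (Suc k) (xs ! i) (xs ! j)
       = (\<Sum>l<n. A $$ (i,l) * (A ^\<^sub>m k) $$ (l,j))"
      using Suc by (simp add: matmul_def sum_arcs Aij)
    also have "\<dots> = (A * A ^\<^sub>m k) $$ (i,j)"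
      using mult_entry[OF Ac _ Suc.prems, of "A ^\<^sub>m k"] Ac by simp
    also have "\<dots> = (A ^\<^sub>m Suc k) $$ (i,j)" by (simp only: pow_mat_Suc_left[OF Ac])
    finally show ?case .
  qed
  have Av: "(A *\<^sub>v vec n (\<lambda>i. \<psi> (xs ! i))) $ i = (\<Sum>f\<in>arcs Adj. grover_U V Adj (xs ! i) f * \<psi> f)"
    if "i < n" for i \<psi>
    using mult_vec_entry[OF Ac _ that, of "vec n (\<lambda>i. \<psi> (xs ! i))"] that
    by (simp add: sum_arcs Aij)
  show ?thesis
  proof
    assume "grover_periodic V Adj"
    then obtain k where k: "k > 0" and per: "\<forall>e\<in>arcs Adj. \<forall>f\<in>arcs Adj.
        matpow (arcs Adj) (grover_U V Adj) k e f = idmat e f"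
      unfolding grover_periodic_def by blast
    have Ak: "A ^\<^sub>m k = 1\<^sub>m n"
    proof (rule eq_matI)
      fix i j assume "i < dim_row (1\<^sub>m n)" "j < dim_col (1\<^sub>m n)"
      hence ij: "i < n" "j < n" by auto
      have "(A ^\<^sub>m k) $$ (i,j) = idmat (xs ! i) (xs ! j)"
        using pow[OF ij, of k] per xs_in[OF ij(1)] xs_in[OF ij(2)] by metis
      thus "(A ^\<^sub>m k) $$ (i,j) = 1\<^sub>m n $$ (i,j)"
        using ij xs(2) unfolding n_def by (simp add: idmat_def nth_eq_iff_index_eq)
    qed (use Ac in auto)
    show "\<forall>l::real. is_eigenvalue V (trans_T V Adj) (complex_of_real l) \<longrightarrow> (\<exists>q\<in>\<rat>. arccos l = pi * q)"
    proof (intro allI impI)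
      fix l :: real assume ev: "is_eigenvalue V (trans_T V Adj) (complex_of_real l)"
      show "\<exists>q\<in>\<rat>. arccos l = pi * q"
      proof (rule G.fwd_main[OF _ ev])
        fix \<psi> \<mu>
        assume nz: "\<exists>e\<in>arcs Adj. \<psi> e \<noteq> 0"
          and eig: "\<forall>e\<in>arcs Adj. (\<Sum>f\<in>arcs Adj. grover_U V Adj e f * \<psi> f) = \<mu> * \<psi> e"
        define v where "v = vec n (\<lambda>i. \<psi> (xs ! i))"
        obtain e where e: "e \<in> arcs Adj" "\<psi> e \<noteq> 0" using nz by blast
        then obtain i0 where i0: "i0 < n" "e = xs ! i0" using arc_ex by blast
        have vc: "v \<in> carrier_vec n" unfolding v_def by simp
        have "A *\<^sub>v v = \<mu> \<cdot>\<^sub>v v"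
          by (rule eq_vecI) (use Av eig xs_in Ac in \<open>auto simp: v_def\<close>)
        moreover have "v \<noteq> 0\<^sub>v n"
        proof
          assume "v = 0\<^sub>v n"
          hence "v $ i0 = 0" using i0 by simp
          thus False using e i0 unfolding v_def by simp
        qed
        ultimately have evv: "eigenvector A v \<mu>" unfolding eigenvector_def using vc Ac by auto
        have "A ^\<^sub>m k *\<^sub>v v = \<mu> ^ k \<cdot>\<^sub>v v" by (rule eigenvector_pow[OF Ac evv])
        hence "v = \<mu> ^ k \<cdot>\<^sub>v v" unfolding Ak using vc by simp
        hence "v $ i0 = \<mu> ^ k * v $ i0" by (metis i0(1) index_smult_vec(1) vc carrier_vecD)
        moreover have "v $ i0 \<noteq> 0" using e i0 unfolding v_def by simp
        ultimately have "\<mu> ^ k = 1" by simp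
        thus "\<exists>k>0. \<mu> ^ k = 1" using k by blast
      qed
    qed
  next
    assume H: "\<forall>l::real. is_eigenvalue V (trans_T V Adj) (complex_of_real l) \<longrightarrow> (\<exists>q\<in>\<rat>. arccos l = pi * q)"
    have unit: "(\<Sum>i<n. A $$ (i,j) * cnj (A $$ (i,l))) = (if j = l then 1 else 0)"
      if "j < n" "l < n" for j l
    proof -
      have "(\<Sum>i<n. A $$ (i,j) * cnj (A $$ (i,l))) = (\<Sum>i<n. grover_U V Adj (xs ! i) (xs ! j) * grover_U V Adj (xs ! i) (xs ! l))"
        using that by (intro sum.cong refl) (simp add: Aij grover_U_def)
      also have "\<dots> = (\<Sum>e\<in>arcs Adj. grover_U V Adj e (xs ! j) * grover_U V Adj e (xs ! l))"
        by (simp add: sum_arcs)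
      also have "\<dots> = (if xs ! j = xs ! l then 1 else 0)" by (rule G.unit_fun) (use xs_in that in auto)
      also have "\<dots> = (if j = l then 1 else 0)" using that xs(2) unfolding n_def by (simp add: nth_eq_iff_index_eq)
      finally show ?thesis .
    qed
    have root: "\<exists>m>0. \<mu> ^ m = 1" if ev: "eigenvalue A \<mu>" for \<mu>
    proof -
      obtain v where evv: "eigenvector A v \<mu>" using ev unfolding eigenvalue_def by blast
      hence vc: "v \<in> carrier_vec n" and v0: "v \<noteq> 0\<^sub>v n" and Avv: "A *\<^sub>v v = \<mu> \<cdot>\<^sub>v v"
        unfolding eigenvector_def using Ac by auto
      obtain i0 where i0: "i0 < n" "v $ i0 \<noteq> 0"
      proof -
        have "\<exists>i<n. v $ i \<noteq> 0"
        proof (rule ccontr)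
          assume "\<not> (\<exists>i<n. v $ i \<noteq> 0)"
          hence "v = 0\<^sub>v n" using vc by (intro eq_vecI) auto
          thus False using v0 by simp
        qed
        thus ?thesis using that by blast
      qed
      define a where "a i = v $ i" for i
      have mva: "mv n A a i = \<mu> * a i" if "i < n" for i
      proof -
        have "mv n A a i = (A *\<^sub>v v) $ i" unfolding mv_def a_def using mult_vec_entry[OF Ac vc that] by simp
        also have "\<dots> = \<mu> * a i" unfolding Avv a_def using vc that by simp
        finally show ?thesis .
      qed
      have "ip n (mv n A a) (mv n A a) = ip n a a" by (rule ip_iso[OF Ac unit])
      also have "ip n (mv n A a) (mv n A a) = (\<mu> * cnj \<mu>) * ip n a a"
        unfolding ip_def by (subst sum_distrib_left, intro sum.cong refl) (simp add: mva)
      finally have "(\<mu> * cnj \<mu> - 1) * ip n a a = 0" by (simp add: algebra_simps)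
      moreover have "ip n a a \<noteq> 0" using ip_self_zero[of n a i0] i0 unfolding a_def by auto
      ultimately have "\<mu> * cnj \<mu> = 1" by simp
      hence "complex_of_real ((cmod \<mu>)\<^sup>2) = 1" using complex_norm_square[of \<mu>] by simp
      hence "(cmod \<mu>)\<^sup>2 = 1" by (simp only: of_real_eq_1_iff)
      hence n1: "cmod \<mu> = 1" using norm_ge_zero[of \<mu>] power2_eq_1_iff[of "cmod \<mu>"] by linarith
      define \<psi> where "\<psi> e = v $ (the_inv_into {..<n} ((!) xs) e)" for e
      have inj: "inj_on ((!) xs) {..<n}" using xs(2) unfolding n_def by (intro inj_on_nth) auto
      have psi: "\<psi> (xs ! i) = v $ i" if "i < n" for i
        unfolding \<psi>_def using the_inv_into_f_f[OF inj] that by simp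
      show ?thesis
      proof (rule G.bwd_main)
        show "\<And>l::real. is_eigenvalue V (trans_T V Adj) (complex_of_real l) \<Longrightarrow> \<exists>q\<in>\<rat>. arccos l = pi * q"
          using H by blast
        show "\<exists>e\<in>arcs Adj. \<psi> e \<noteq> 0" using i0 psi xs_in by metis
        show "cmod \<mu> = 1" by (rule n1)
        fix e assume e: "e \<in> arcs Adj"
        then obtain i where i: "i < n" "e = xs ! i" using arc_ex by blast
        have vv: "v = vec n (\<lambda>i. \<psi> (xs ! i))" using vc psi by (intro eq_vecI) auto
        have "(\<Sum>f\<in>arcs Adj. grover_U V Adj e f * \<psi> f) = (A *\<^sub>v v) $ i"
          unfolding i(2) vv by (rule Av[OF i(1), symmetric])
        also have "\<dots> = \<mu> * \<psi> e" unfolding Avv using vc i psi by simp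
        finally show "(\<Sum>f\<in>arcs Adj. grover_U V Adj e f * \<psi> f) = \<mu> * \<psi> e" .
      qed
    qed
    define ord where "ord \<mu> = (SOME m. m > 0 \<and> \<mu> ^ m = 1)" for \<mu> :: complex
    have ord: "ord \<mu> > 0 \<and> \<mu> ^ ord \<mu> = 1" if "eigenvalue A \<mu>" for \<mu>
      unfolding ord_def using someI_ex[OF root[OF that]] .
    define K where "K = (\<Prod>\<mu>\<in>spectrum A. ord \<mu>)"
    have finS: "finite (spectrum A)" by (rule card_finite_spectrum[OF Ac])
    have Kpos: "K > 0" unfolding K_def using ord finS
      by (intro prod_pos) (auto simp: spectrum_def)
    have evK: "\<mu> ^ K = 1" if "eigenvalue A \<mu>" for \<mu>
    proof -
      have "\<mu> \<in> spectrum A" using that by (simp add: spectrum_def)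
      hence "ord \<mu> dvd K" unfolding K_def using finS by (intro dvd_prodI)
      then obtain c where "K = ord \<mu> * c" by blast
      thus ?thesis using ord[OF that] by (simp add: power_mult)
    qed
    have AK: "A ^\<^sub>m K = 1\<^sub>m n" by (rule unitary_eig_periodic[OF Ac unit evK])
    show "grover_periodic V Adj" unfolding grover_periodic_def
    proof (intro exI[of _ K] conjI Kpos ballI)
      fix e f assume "e \<in> arcs Adj" "f \<in> arcs Adj"
      then obtain i j where ij: "i < n" "e = xs ! i" "j < n" "f = xs ! j" using arc_ex by blast
      have "matpow (arcs Adj) (grover_U V Adj) K e f = (A ^\<^sub>m K) $$ (i,j)" using pow ij by simp
      also have "\<dots> = (if i = j then 1 else 0)" unfolding AK using ij by simp
      also have "\<dots> = idmat e f" using ij xs(2) unfolding n_def by (simp add: idmat_def nth_eq_iff_index_eq)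
      finally show "matpow (arcs Adj) (grover_U V Adj) K e f = idmat e f" .
    qed
  qed
qed


end
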